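(* Let $q,n\ge 2$ and $0<d\le n$ be integers with $(q,d)\neq(2,n)$, and let $G=H_q(n,d)$. (a) If $q\ge 3$, then the graph distance between any two vertices of $G$ is at most $2$, and $\mathrm{girth}(G)=3$. (b) If $q=2$ and $d\le \frac{2n}{3}$, then $\mathrm{girth}(G)=3$. (c) If $q=2$ and $\frac{2n}{3}<d<n$, then $\mathrm{girth}(G)=4$; moreover, $G$ contains a cycle of odd length.
   Context: $\mathbb{Z}_q=\mathbb{Z}/q\mathbb{Z}$. For $x,y\in\mathbb{Z}_q^n$, $\mathrm{d}(x,y)=|\{i: x_i\neq y_i\}|$ is the Hamming distance. The Hamming-distance graph $H_q(n,d)$ is the simple undirected graph with vertex set $\mathbb{Z}_q^n$ in which $x,y$ are adjacent iff $\mathrm{d}(x,y)\ge d$. The girth is the length of a shortest cycle. *)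

theory Defs
  imports Main "HOL-Library.Extended_Nat"
begin

definition hvert :: "nat \<Rightarrow> nat \<Rightarrow> nat list set" where
  "hvert q n = {xs. length xs = n \<and> (\<forall>x\<in>set xs. x < q)}"

definition hdist :: "nat list \<Rightarrow> nat list \<Rightarrow> nat" where
  "hdist xs ys = card {i. i < length xs \<and> xs ! i \<noteq> ys ! i}"

definition hadj :: "nat \<Rightarrow> nat \<Rightarrow> nat \<Rightarrow> nat list \<Rightarrow> nat list \<Rightarrow> bool" where
  "hadj q n d x y \<longleftrightarrow> x \<in> hvert q n \<and> y \<in> hvert q n \<and> x \<noteq> y \<and> hdist x y \<ge> d"

definition is_walk :: "'a set \<Rightarrow> ('a \<Rightarrow> 'a \<Rightarrow> bool) \<Rightarrow> 'a list \<Rightarrow> bool" where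
  "is_walk V E p \<longleftrightarrow> p \<noteq> [] \<and> set p \<subseteq> V \<and> (\<forall>i. i + 1 < length p \<longrightarrow> E (p ! i) (p ! (i + 1)))"

text \<open>Graph distance (infinite if no walk exists); walk length = number of edges.\<close>
definition gdist :: "'a set \<Rightarrow> ('a \<Rightarrow> 'a \<Rightarrow> bool) \<Rightarrow> 'a \<Rightarrow> 'a \<Rightarrow> enat" where
  "gdist V E u v = (INF p \<in> {p. is_walk V E p \<and> hd p = u \<and> last p = v}. enat (length p - 1))"

definition is_cycle :: "'a set \<Rightarrow> ('a \<Rightarrow> 'a \<Rightarrow> bool) \<Rightarrow> 'a list \<Rightarrow> bool" where
  "is_cycle V E c \<longleftrightarrow> length c \<ge> 3 \<and> distinct c \<and> is_walk V E c \<and> E (last c) (hd c)"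

definition girth :: "'a set \<Rightarrow> ('a \<Rightarrow> 'a \<Rightarrow> bool) \<Rightarrow> enat" where
  "girth V E = (INF c \<in> {c. is_cycle V E c}. enat (length c))"

end

theory Submission
  imports Defs
begin


lemma walk_single[simp]: "is_walk V E [x] \<longleftrightarrow> x \<in> V"
  by (auto simp: is_walk_def)

lemma walk_cons2[simp]: "is_walk V E (x#y#xs) \<longleftrightarrow> x \<in> V \<and> E x y \<and> is_walk V E (y#xs)"
proof
  assume h: "is_walk V E (x#y#xs)"
  have W: "\<forall>i. i+1 < length (x#y#xs) \<longrightarrow> E ((x#y#xs)!i) ((x#y#xs)!(i+1))"
    and S: "set (x#y#xs) \<subseteq> V" using h unfolding is_walk_def by blast+
  have "E x y" using W[rule_format, of 0] by simp
  moreover have "E ((y#xs)!i) ((y#xs)!(i+1))" if "i+1 < length (y#xs)" for i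
    using W[rule_format, of "Suc i"] that by simp
  ultimately show "x \<in> V \<and> E x y \<and> is_walk V E (y#xs)" using S unfolding is_walk_def by auto
next
  assume h: "x \<in> V \<and> E x y \<and> is_walk V E (y#xs)"
  show "is_walk V E (x#y#xs)" unfolding is_walk_def
  proof (intro conjI allI impI)
    show "set (x#y#xs) \<subseteq> V" using h by (auto simp: is_walk_def)
    fix i assume "i+1 < length (x#y#xs)"
    then show "E ((x#y#xs)!i) ((x#y#xs)!(i+1))" using h
      by (cases i) (auto simp: is_walk_def)
  qed simp
qed

lemma hdist_ge:
  assumes "A \<subseteq> {i. i < length x \<and> x!i \<noteq> y!i}"
  shows "card A \<le> hdist x y"
  unfolding hdist_def by (rule card_mono[OF _ assms]) simp

lemma hdist_pos_neq: "0 < hdist x y \<Longrightarrow> x \<noteq> y"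
  by (auto simp: hdist_def)

lemma hdist_word: "hdist (map f [0..<n]) (map g [0..<n]) = card {i. i<n \<and> f i \<noteq> g i}"
  unfolding hdist_def by (rule arg_cong[where f=card]) auto

lemma hvert_word: "(\<forall>i<n. f i < q) \<Longrightarrow> map f [0..<n] \<in> hvert q n"
  by (auto simp: hvert_def)

lemma girth_ge3: "girth V E \<ge> 3"
  unfolding girth_def by (rule INF_greatest) (auto simp: is_cycle_def)

lemma girth_eq:
  assumes "is_cycle V E c" "length c = m" "\<And>c. is_cycle V E c \<Longrightarrow> m \<le> length c"
  shows "girth V E = enat m"
  unfolding girth_def
proof (rule antisym)
  show "(INF c\<in>{c. is_cycle V E c}. enat (length c)) \<le> enat m"
    using assms(1,2) by (metis INF_lower mem_Collect_eq)
  show "enat m \<le> (INF c\<in>{c. is_cycle V E c}. enat (length c))"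
    by (rule INF_greatest) (use assms(3) in auto)
qed

lemma cycle3: "E a b \<Longrightarrow> E b c \<Longrightarrow> E c a \<Longrightarrow> a \<in> V \<Longrightarrow> b \<in> V \<Longrightarrow> c \<in> V
  \<Longrightarrow> distinct [a,b,c] \<Longrightarrow> is_cycle V E [a,b,c]"
  by (simp add: is_cycle_def)

lemma cycle4: "E a b \<Longrightarrow> E b c \<Longrightarrow> E c e \<Longrightarrow> E e a \<Longrightarrow> a \<in> V \<Longrightarrow> b \<in> V \<Longrightarrow> c \<in> V
  \<Longrightarrow> e \<in> V \<Longrightarrow> a \<noteq> b \<Longrightarrow> a \<noteq> c \<Longrightarrow> a \<noteq> e \<Longrightarrow> b \<noteq> c \<Longrightarrow> b \<noteq> e \<Longrightarrow> c \<noteq> e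
  \<Longrightarrow> is_cycle V E [a,b,c,e]"
  by (simp add: is_cycle_def)

lemma hadj_neq: "hadj q n d x y \<Longrightarrow> x \<noteq> y"
  by (simp add: hadj_def)

lemma girth3:
  assumes "is_cycle V E [a,b,c]" shows "girth V E = 3"
  using girth_eq[OF assms, of 3] by (simp add: is_cycle_def numeral_eq_enat)

lemma card_filter_sum: "card {i. i<(n::nat) \<and> P i} = (\<Sum>i<n. if P i then 1 else 0)"
proof (induction n)
  case 0 show ?case by simp
next
  case (Suc n)
  show ?case
  proof (cases "P n")
    case True
    have "{i. i<Suc n \<and> P i} = insert n {i. i<n \<and> P i}" using True by (auto simp: less_Suc_eq)
    moreover have "card (insert n {i. i<n \<and> P i}) = Suc (card {i. i<n \<and> P i})"
      by (rule card_insert_disjoint) auto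
    ultimately show ?thesis using Suc True by simp
  next
    case False
    have "{i. i<Suc n \<and> P i} = {i. i<n \<and> P i}" using False by (auto simp: less_Suc_eq)
    then show ?thesis using Suc False by simp
  qed
qed

lemma no_triangle:
  assumes "a \<in> hvert 2 n" "b \<in> hvert 2 n" "c \<in> hvert 2 n"
  shows "hdist a b + hdist b c + hdist c a \<le> 2*n"
proof -
  have L: "length a = n" "length b = n" "length c = n" using assms by (auto simp: hvert_def)
  have pt: "(if a!i \<noteq> b!i then 1 else 0) + (if b!i \<noteq> c!i then 1 else 0) + (if c!i \<noteq> a!i then 1 else 0) \<le> (2::nat)"
    if "i<n" for i
  proof -
    have "a!i < 2" "b!i < 2" "c!i < 2" using assms that L by (auto simp: hvert_def)
    then show ?thesis by auto
  qed
  have "hdist a b + hdist b c + hdist c a =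
     (\<Sum>i<n. (if a!i \<noteq> b!i then 1 else 0) + (if b!i \<noteq> c!i then 1 else 0) + (if c!i \<noteq> a!i then 1 else 0))"
    by (simp add: hdist_def L card_filter_sum sum.distrib)
  also have "\<dots> \<le> (\<Sum>i<n. 2)" by (rule sum_mono) (use pt in auto)
  finally show ?thesis by simp
qed

lemma hadj_I: "x \<in> hvert q n \<Longrightarrow> y \<in> hvert q n \<Longrightarrow> 0 < d \<Longrightarrow> d \<le> hdist x y \<Longrightarrow> hadj q n d x y"
  unfolding hadj_def by (metis hdist_pos_neq less_le_trans)

lemma hdist_all:
  assumes "length x = n" "\<And>i. i < n \<Longrightarrow> x!i \<noteq> y!i"
  shows "n \<le> hdist x y"
  using hdist_ge[of "{..<n}" x y] assms by auto

definition g3 :: "nat \<Rightarrow> nat \<Rightarrow> nat" where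
  "g3 a b = (if a \<noteq> 0 \<and> b \<noteq> 0 then 0 else if a \<noteq> 1 \<and> b \<noteq> 1 then 1 else 2)"

lemma g3: "g3 a b \<noteq> a" "g3 a b \<noteq> b" "g3 a b \<le> 2" "a \<noteq> g3 a b" "b \<noteq> g3 a b"
  by (auto simp: g3_def)

lemma part_a_dist:
  assumes "q \<ge> 3" "0 < d" "d \<le> n" "u \<in> hvert q n" "v \<in> hvert q n"
  shows "gdist (hvert q n) (hadj q n d) u v \<le> 2"
proof (cases "u = v")
  case True
  have "[u] \<in> {p. is_walk (hvert q n) (hadj q n d) p \<and> hd p = u \<and> last p = v}"
    using True assms by simp
  then have "gdist (hvert q n) (hadj q n d) u v \<le> enat (length [u] - 1)"
    unfolding gdist_def by (rule INF_lower)
  then show ?thesis by (simp add: zero_enat_def[symmetric])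
next
  case False
  have L: "length u = n" "length v = n" using assms by (auto simp: hvert_def)
  define w where "w = map (\<lambda>i. g3 (u!i) (v!i)) [0..<n]"
  have wv: "w \<in> hvert q n" unfolding w_def
  proof (rule hvert_word, intro allI impI)
    fix i show "g3 (u!i) (v!i) < q" using g3(3)[of "u!i" "v!i"] assms(1) by linarith
  qed
  have "n \<le> hdist u w" by (rule hdist_all) (use L g3 in \<open>auto simp: w_def\<close>)
  then have e1: "hadj q n d u w" using assms wv by (intro hadj_I) auto
  have "n \<le> hdist w v" by (rule hdist_all) (use L g3 in \<open>auto simp: w_def\<close>)
  then have e2: "hadj q n d w v" using assms wv by (intro hadj_I) auto
  have "[u,w,v] \<in> {p. is_walk (hvert q n) (hadj q n d) p \<and> hd p = u \<and> last p = v}"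
    using e1 e2 assms wv by simp
  then have "gdist (hvert q n) (hadj q n d) u v \<le> enat (length [u,w,v] - 1)"
    unfolding gdist_def by (rule INF_lower)
  then show ?thesis by (simp add: numeral_eq_enat numeral_2_eq_2)
qed

lemma part_a_girth:
  assumes "q \<ge> 3" "0 < d" "d \<le> n"
  shows "girth (hvert q n) (hadj q n d) = 3"
proof -
  let ?a = "replicate n (0::nat)" and ?b = "replicate n (1::nat)" and ?c = "replicate n (2::nat)"
  have V: "?a \<in> hvert q n" "?b \<in> hvert q n" "?c \<in> hvert q n" using assms by (auto simp: hvert_def)
  have "n \<le> hdist ?a ?b" "n \<le> hdist ?b ?c" "n \<le> hdist ?c ?a" by (auto intro: hdist_all)
  then have E: "hadj q n d ?a ?b" "hadj q n d ?b ?c" "hadj q n d ?c ?a"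
    using V assms by (auto intro!: hadj_I)
  then have "distinct [?a,?b,?c]" by (auto simp: hadj_def)
  then show ?thesis using E V by (intro girth3 cycle3)
qed

lemma part_b:
  assumes "0 < d" "d \<le> n" "3*d \<le> 2*n"
  shows "girth (hvert 2 n) (hadj 2 n d) = 3"
proof -
  let ?a = "map (\<lambda>i. 0::nat) [0..<n]" and ?b = "map (\<lambda>i. if i < d then 1 else 0::nat) [0..<n]"
    and ?c = "map (\<lambda>i. if n - d \<le> i then 1 else 0::nat) [0..<n]"
  have V: "?a \<in> hvert 2 n" "?b \<in> hvert 2 n" "?c \<in> hvert 2 n" by (auto intro!: hvert_word)
  have "{..<d} \<subseteq> {i. i < length ?a \<and> ?a!i \<noteq> ?b!i}" using assms by auto
  from hdist_ge[OF this] have "d \<le> hdist ?a ?b" by simp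
  moreover have "{n-d..<n} \<subseteq> {i. i < length ?c \<and> ?c!i \<noteq> ?a!i}" using assms by auto
  from hdist_ge[OF this] have "d \<le> hdist ?c ?a" using assms by simp
  moreover have "d \<le> hdist ?b ?c"
  proof (cases "2*d \<le> n")
    case True
    have "{..<d} \<subseteq> {i. i < length ?b \<and> ?b!i \<noteq> ?c!i}" using assms True by (auto split: if_splits)
    from hdist_ge[OF this] show ?thesis by simp
  next
    case False
    have "{..<n-d} \<union> {d..<n} \<subseteq> {i. i < length ?b \<and> ?b!i \<noteq> ?c!i}" using False by (auto split: if_splits)
    from hdist_ge[OF this] have "card ({..<n-d} \<union> {d..<n}) \<le> hdist ?b ?c" .
    moreover have "card ({..<n-d} \<union> {d..<n}) = (n-d) + (n-d)"
      using False by (subst card_Un_disjoint) auto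
    ultimately show ?thesis using assms by linarith
  qed
  ultimately have E: "hadj 2 n d ?a ?b" "hadj 2 n d ?b ?c" "hadj 2 n d ?c ?a"
    using V assms by (auto intro!: hadj_I)
  then have "distinct [?a,?b,?c]" by (auto simp: hadj_def)
  then show ?thesis using E V by (intro girth3 cycle3)
qed



lemma part_c_noTri:
  assumes "2*n < 3*d" "hadj 2 n d x y" "hadj 2 n d y z" "hadj 2 n d z x"
  shows False
proof -
  have "hdist x y + hdist y z + hdist z x \<le> 2*n"
    using assms by (intro no_triangle) (auto simp: hadj_def)
  moreover have "d \<le> hdist x y" "d \<le> hdist y z" "d \<le> hdist z x" using assms by (auto simp: hadj_def)
  ultimately show False using assms(1) by linarith
qed

lemma part_c_girth:
  assumes "n \<ge> 2" "2*n < 3*d" "d < n"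
  shows "girth (hvert 2 n) (hadj 2 n d) = 4"
proof -
  have d0: "0 < d" using assms by linarith
  let ?a = "map (\<lambda>i. 0::nat) [0..<n]" and ?b = "map (\<lambda>i. 1::nat) [0..<n]"
    and ?c = "map (\<lambda>i. if i = 0 then 1 else 0::nat) [0..<n]"
    and ?e = "map (\<lambda>i. if i = 0 then 0 else 1::nat) [0..<n]"
  have V: "?a \<in> hvert 2 n" "?b \<in> hvert 2 n" "?c \<in> hvert 2 n" "?e \<in> hvert 2 n"
    by (auto intro!: hvert_word)
  have h1: "n \<le> hdist ?a ?b" by (rule hdist_all) auto
  have h3: "n \<le> hdist ?c ?e" by (rule hdist_all) auto
  have "{1..<n} \<subseteq> {i. i < length ?b \<and> ?b!i \<noteq> ?c!i}" by auto
  from hdist_ge[OF this] have h2: "n - 1 \<le> hdist ?b ?c" by simp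
  have "{1..<n} \<subseteq> {i. i < length ?e \<and> ?e!i \<noteq> ?a!i}" by auto
  from hdist_ge[OF this] have h4: "n - 1 \<le> hdist ?e ?a" by simp
  have E: "hadj 2 n d ?a ?b" "hadj 2 n d ?b ?c" "hadj 2 n d ?c ?e" "hadj 2 n d ?e ?a"
    by (rule hadj_I[OF V(1) V(2) d0], use h1 assms in linarith)
       (rule hadj_I[OF V(2) V(3) d0], use h2 assms in linarith,
        rule hadj_I[OF V(3) V(4) d0], use h3 assms in linarith,
        rule hadj_I[OF V(4) V(1) d0], use h4 assms in linarith)
  have "?a ! 0 \<noteq> ?c ! 0" "?b ! 0 \<noteq> ?e ! 0" using assms by auto
  then have ne: "?a \<noteq> ?c" "?b \<noteq> ?e" by metis+
  have C: "is_cycle (hvert 2 n) (hadj 2 n d) [?a,?b,?c,?e]"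
    by (rule cycle4[OF E V hadj_neq[OF E(1)] ne(1) not_sym[OF hadj_neq[OF E(4)]]
          hadj_neq[OF E(2)] ne(2) hadj_neq[OF E(3)]])
  have "girth (hvert 2 n) (hadj 2 n d) = enat 4"
  proof (rule girth_eq[OF C])
    fix c assume c: "is_cycle (hvert 2 n) (hadj 2 n d) c"
    show "4 \<le> length c"
    proof (rule ccontr)
      assume "\<not> 4 \<le> length c"
      with c have "length c = 3" by (auto simp: is_cycle_def)
      then obtain x y z where xyz: "c = [x,y,z]"
        using \<open>length c = 3\<close> by (auto simp: length_Suc_conv numeral_3_eq_3)
      from c have "hadj 2 n d x y" "hadj 2 n d y z" "hadj 2 n d z x"
        by (simp_all add: xyz is_cycle_def)
      then show False by (rule part_c_noTri[OF assms(2)])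
    qed
  qed simp
  then show ?thesis by (simp add: numeral_eq_enat)
qed


definition aw :: "nat \<Rightarrow> nat \<Rightarrow> nat list" where
  "aw n k = map (\<lambda>i. if (i<k) \<noteq> odd k then 1 else 0) [0..<n]"

lemma aw_V: "aw n k \<in> hvert 2 n"
  unfolding aw_def by (rule hvert_word) auto

lemma aw_edge:
  assumes "0 < d" "d < n"
  shows "hadj 2 n d (aw n k) (aw n (Suc k))"
proof -
  have "{..<n} - {k} \<subseteq> {i. i < length (aw n k) \<and> aw n k ! i \<noteq> aw n (Suc k) ! i}"
    by (auto simp: aw_def less_Suc_eq split: if_splits)
  from hdist_ge[OF this] have "card ({..<n} - {k}) \<le> hdist (aw n k) (aw n (Suc k))" .
  moreover have "n - 1 \<le> card ({..<n} - {k})" by (simp add: card_Diff_singleton_if)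
  ultimately show ?thesis using assms by (intro hadj_I aw_V) auto
qed

lemma aw_close:
  assumes "0 < d" "d < n"
  shows "hadj 2 n d (aw n (2*(n div 2))) (aw n 0)"
proof -
  have nn: "n - 1 \<le> 2*(n div 2)" by presburger
  have "{..<n-1} \<subseteq> {i. i < length (aw n (2*(n div 2))) \<and> aw n (2*(n div 2)) ! i \<noteq> aw n 0 ! i}"
    using nn by (auto simp: aw_def)
  from hdist_ge[OF this] have "n - 1 \<le> hdist (aw n (2*(n div 2))) (aw n 0)" by simp
  then show ?thesis using assms by (intro hadj_I aw_V) auto
qed

lemma aw_inj:
  assumes "k < 2*(n div 2)+1" "k' < 2*(n div 2)+1" "aw n k = aw n k'" "n \<ge> 2"
  shows "k = k'"
proof (rule ccontr)
  assume ne: "k \<noteq> k'"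
  have B: "((i<k) \<noteq> odd k) = ((i<k') \<noteq> odd k')" if "i < n" for i
  proof -
    have "aw n k ! i = aw n k' ! i" using assms(3) by simp
    then show ?thesis using that by (auto simp: aw_def split: if_splits)
  qed
  have kn: "k \<le> n" "k' \<le> n" using assms(1,2) by auto
  show False
  proof (cases "odd k = odd k'")
    case True
    have "min k k' < n" using kn ne by linarith
    from B[OF this] True ne show False by (auto simp: min_def split: if_splits)
  next
    case False
    have "(0<k) \<noteq> (0<k')" using B[of 0] False assms(4) by auto
    moreover have h2: "((n-1)<k) \<noteq> ((n-1)<k')" using B[of "n-1"] False assms(4) by auto
    ultimately have "k = 0 \<or> k' = 0" by auto
    then show False
    proof
      assume k0: "k = 0"
      then have "odd k'" using False by simp
      have "n - 1 < k'" using h2 k0 by simp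
      then have "k' = n" using kn by simp
      with \<open>odd k'\<close> have "2*(n div 2)+1 = n" by simp
      with assms(2) \<open>k' = n\<close> show False by simp
    next
      assume k0: "k' = 0"
      then have "odd k" using False by simp
      have "n - 1 < k" using h2 k0 by simp
      then have "k = n" using kn by simp
      with \<open>odd k\<close> have "2*(n div 2)+1 = n" by simp
      with assms(1) \<open>k = n\<close> show False by simp
    qed
  qed
qed


lemma part_c_odd:
  assumes "n \<ge> 2" "0 < d" "d < n"
  shows "\<exists>c. is_cycle (hvert 2 n) (hadj 2 n d) c \<and> odd (length c)"
proof -
  define L where "L = 2*(n div 2)+1"
  define c where "c = map (aw n) [0..<L]"
  have len: "length c = L" "odd L" "L \<ge> 3" using assms by (auto simp: c_def L_def)
  have "inj_on (aw n) {0..<L}" unfolding inj_on_def L_def using aw_inj assms(1) by auto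
  then have "distinct c" by (simp only: c_def distinct_map set_upt distinct_upt simp_thms)
  moreover have "is_walk (hvert 2 n) (hadj 2 n d) c"
    unfolding is_walk_def
  proof (intro conjI allI impI)
    show "c \<noteq> []" using len by (metis list.size(3) not_numeral_le_zero)
    show "set c \<subseteq> hvert 2 n" unfolding c_def using aw_V by auto
    fix i assume i: "i + 1 < length c"
    then have "c ! i = aw n i" "c ! (i+1) = aw n (Suc i)" using len
      by (simp_all add: c_def del: upt_Suc)
    then show "hadj 2 n d (c ! i) (c ! (i + 1))" using aw_edge[OF assms(2,3)] by simp
  qed
  moreover have "hadj 2 n d (last c) (hd c)"
  proof -
    have "last c = aw n (2*(n div 2))" "hd c = aw n 0" using len
      by (auto simp: c_def L_def last_map hd_map simp del: upt_Suc)
    then show ?thesis using aw_close[OF assms(2,3)] by simp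
  qed
  moreover have "3 \<le> length c" "odd (length c)" using len by simp_all
  ultimately have "is_cycle (hvert 2 n) (hadj 2 n d) c \<and> odd (length c)"
    unfolding is_cycle_def by blast
  then show ?thesis by blast
qed


theorem proposition2p3:
  fixes q n d :: nat
  assumes "q \<ge> 2" and "n \<ge> 2" and "0 < d" and "d \<le> n" and "(q, d) \<noteq> (2, n)"
  shows "(q \<ge> 3 \<longrightarrow>
            (\<forall>u\<in>hvert q n. \<forall>v\<in>hvert q n. gdist (hvert q n) (hadj q n d) u v \<le> 2)
            \<and> girth (hvert q n) (hadj q n d) = 3)
       \<and> (q = 2 \<and> 3 * d \<le> 2 * n \<longrightarrow> girth (hvert q n) (hadj q n d) = 3)
       \<and> (q = 2 \<and> 2 * n < 3 * d \<and> d < n \<longrightarrow>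
            girth (hvert q n) (hadj q n d) = 4
            \<and> (\<exists>c. is_cycle (hvert q n) (hadj q n d) c \<and> odd (length c)))"
  using part_a_dist[OF _ assms(3,4)] part_a_girth[OF _ assms(3,4)] part_b[OF assms(3,4)]
    part_c_girth[OF assms(2)] part_c_odd[OF assms(2,3)]
  by auto

end
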